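(* Let $\langle T,\le\rangle$ be a temporal flow and $v$ a temporal assignment over variables on $T$ (extended to formulas pointwise as in the context). Then for every formula $\varphi$, the function $v(\varphi,\cdot)$ is admissible and $s^v(\varphi)=d(v(\varphi,\cdot))$.
   Context: A temporal flow is a totally ordered infinite set $\langle T,\le\rangle$. On $\{0,\frac12,1\}$ put $\neg_3x=1-x$, $x\to_3y=\min(1,1-x+y)$. A function $f:T\to\{0,\frac12,1\}$ is admissible if it is constant, or there exist $i\in\{0,1\}$ and $t\in T$ (not the minimum of $T$, if $T$ has one) with $f(t')=i$ for all $t'\ge t$ and $f(t'')=\frac12$ for all $t''<t$. Let $T'=T\cup\{-\infty\}$; for admissible $f$ define $d(f)=\langle-\infty,c\rangle$ if $f$ is constant with value $c$, and $d(f)=\langle t,i\rangle$ in the second case. Let $T''=(T'\times\{0,1\})\cup\{\langle-\infty,\frac12\rangle\}$, totally ordered by: for $t<t'$ in $T$, $\langle-\infty,0\rangle<\langle t,0\rangle<\langle t',0\rangle<\langle-\infty,\frac12\rangle<\langle t',1\rangle<\langle t,1\rangle<\langle-\infty,1\rangle$. Formulas are built from variables and $\bot$ using $\neg$ and $\to$. A temporal assignment over variables is $v:VAR\times T\to\{0,\frac12,1\}$ with each $v(x,\cdot)$ admissible; it is extended to formulas by $v(\bot,t)=0$, $v(\neg\psi,t)=\neg_3v(\psi,t)$, and $v(\psi\to\chi,t)=v(\psi,t)\to_3v(\chi,t)$ if this equals $v(\psi,t')\to_3v(\chi,t')$ for every $t'\ge t$, and $\frac12$ otherwise. The map $s^v$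 from formulas to $T''$: $s^v(x)=d(v(x,\cdot))$; $s^v(\bot)=\langle-\infty,0\rangle$; if $s^v(\varphi)=\langle a,m\rangle$ then $s^v(\neg\varphi)=\langle a,1-m\rangle$; $s^v(\varphi\to\psi)=\langle-\infty,1\rangle$ if $s^v(\varphi)\le s^v(\psi)$ in $T''$, otherwise the maximum in $T''$ of $s^v(\neg\varphi)$ and $s^v(\psi)$. *)

theory Defs
  imports Main "HOL.Real"
begin

text \<open>Truth values are the reals 0, 1/2, 1; the flow T is a linearly ordered type 'a.\<close>

definition neg3 :: "real \<Rightarrow> real" where
  "neg3 x = 1 - x"

definition imp3 :: "real \<Rightarrow> real \<Rightarrow> real" where
  "imp3 x y = min 1 (1 - x + y)"

definition admissible :: "('a::linorder \<Rightarrow> real) \<Rightarrow> bool" where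
  "admissible f \<longleftrightarrow>
     (\<forall>t. f t \<in> {0, 1/2, 1}) \<and>
     ((\<exists>c. \<forall>t. f t = c) \<or>
      (\<exists>i\<in>{0,1}. \<exists>t. (\<exists>t0. t0 < t) \<and> (\<forall>t'. t' \<ge> t \<longrightarrow> f t' = i)
                         \<and> (\<forall>t''. t'' < t \<longrightarrow> f t'' = 1/2)))"

text \<open>Elements of T'' are pairs (a, m) with a in T' = T + {-infinity} (None = -infinity)
  and m in {0,1}, plus (None, 1/2).\<close>

definition d :: "('a::linorder \<Rightarrow> real) \<Rightarrow> 'a option \<times> real" where
  "d f = (if \<exists>c. \<forall>t. f t = c then (None, THE c. \<forall>t. f t = c)
          else (THE p. \<exists>t i. p = (Some t, i) \<and> i \<in> {0,1} \<and> (\<exists>t0. t0 < t)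
                   \<and> (\<forall>t'. t' \<ge> t \<longrightarrow> f t' = i) \<and> (\<forall>t''. t'' < t \<longrightarrow> f t'' = 1/2)))"

fun less_opt :: "'a::linorder option \<Rightarrow> 'a option \<Rightarrow> bool" where
  "less_opt None None = False"
| "less_opt None (Some _) = True"
| "less_opt (Some _) None = False"
| "less_opt (Some t) (Some t') = (t < t')"

text \<open>Order on T'': (-inf,0) < (t,0) < (t',0) < (-inf,1/2) < (t',1) < (t,1) < (-inf,1) for t < t'.\<close>

definition less2 :: "'a::linorder option \<times> real \<Rightarrow> 'a option \<times> real \<Rightarrow> bool" where
  "less2 p q = (case p of (a, m) \<Rightarrow> case q of (b, n) \<Rightarrow>
      m < n \<or> (m = n \<and> m = 0 \<and> less_opt a b) \<or> (m = n \<and> m = 1 \<and> less_opt b a))"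

definition le2 :: "'a::linorder option \<times> real \<Rightarrow> 'a option \<times> real \<Rightarrow> bool" where
  "le2 p q \<longleftrightarrow> less2 p q \<or> p = q"

definition max2 :: "'a::linorder option \<times> real \<Rightarrow> 'a option \<times> real \<Rightarrow> 'a option \<times> real" where
  "max2 p q = (if le2 p q then q else p)"

datatype 'v form = Var 'v | Bot | Neg "'v form" | Imp "'v form" "'v form"

fun eval :: "('v \<Rightarrow> 'a::linorder \<Rightarrow> real) \<Rightarrow> 'v form \<Rightarrow> 'a \<Rightarrow> real" where
  "eval v (Var x) t = v x t"
| "eval v Bot t = 0"
| "eval v (Neg p) t = neg3 (eval v p t)"
| "eval v (Imp p q) t =
     (if \<forall>t'. t' \<ge> t \<longrightarrow> imp3 (eval v p t') (eval v q t') = imp3 (eval v p t) (eval v q t)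
      then imp3 (eval v p t) (eval v q t) else 1/2)"

definition negT2 :: "'a option \<times> real \<Rightarrow> 'a option \<times> real" where
  "negT2 p = (case p of (a, m) \<Rightarrow> (a, 1 - m))"

fun sv :: "('v \<Rightarrow> 'a::linorder \<Rightarrow> real) \<Rightarrow> 'v form \<Rightarrow> 'a option \<times> real" where
  "sv v (Var x) = d (v x)"
| "sv v Bot = (None, 0)"
| "sv v (Neg p) = negT2 (sv v p)"
| "sv v (Imp p q) = (if le2 (sv v p) (sv v q) then (None, 1) else max2 (negT2 (sv v p)) (sv v q))"

end

theory Submission imports Defs begin

fun cfn :: "'a::linorder option \<times> real \<Rightarrow> 'a \<Rightarrow> real" where
  "cfn (None, c) = (\<lambda>t. c)"
| "cfn (Some s, i) = (\<lambda>t. if t < s then 1/2 else i)"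

fun cvalid :: "'a::linorder option \<times> real \<Rightarrow> bool" where
  "cvalid (None, c) = (c \<in> {0, 1/2, 1})"
| "cvalid (Some s, i) = (i \<in> {0,1} \<and> (\<exists>t0. t0 < s))"

lemma adm_cfn: "cvalid p \<Longrightarrow> admissible (cfn p)"
  by (cases p rule: cvalid.cases) (auto simp: admissible_def)

lemma adm_ex: "admissible f \<Longrightarrow> \<exists>p. cvalid p \<and> f = cfn p"
proof -
  assume "admissible f"
  then consider c where "\<forall>t. f t = c" "\<forall>t. f t \<in> {0,1/2,1}"
    | i t where "i \<in> {0,1}" "\<exists>t0. t0 < t" "\<forall>t'. t' \<ge> t \<longrightarrow> f t' = i" "\<forall>t''. t'' < t \<longrightarrow> f t'' = 1/2"
    unfolding admissible_def by blast
  then show ?thesis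
  proof cases
    case 1
    then show ?thesis by (intro exI[of _ "(None, c)"]) auto
  next
    case 2
    then show ?thesis by (intro exI[of _ "(Some t, i)"]) (auto simp: fun_eq_iff not_less)
  qed
qed

lemma d_cfn: "cvalid p \<Longrightarrow> d (cfn p) = p"
proof (cases p rule: cvalid.cases)
  case (1 c)
  then show ?thesis by (simp add: d_def)
next
  case (2 s i)
  assume v: "cvalid p"
  with 2 obtain t0 where t0: "t0 < s" and i: "i \<in> {0,1}" by auto
  have nc: "\<not> (\<exists>c. \<forall>t. cfn p t = c)"
  proof
    assume "\<exists>c. \<forall>t. cfn p t = c"
    then obtain c where "\<forall>t. cfn p t = c" by blast
    from this[rule_format, of t0] this[rule_format, of s] t0 i 2 show False by auto
  qed
  have "(THE q. \<exists>t j. q = (Some t, j) \<and> j \<in> {0,1} \<and> (\<exists>t0. t0 < t)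
                   \<and> (\<forall>t'. t' \<ge> t \<longrightarrow> cfn p t' = j) \<and> (\<forall>t''. t'' < t \<longrightarrow> cfn p t'' = 1/2)) = p"
  proof (rule the_equality)
    show "\<exists>t j. p = (Some t, j) \<and> j \<in> {0,1} \<and> (\<exists>t0. t0 < t)
                   \<and> (\<forall>t'. t' \<ge> t \<longrightarrow> cfn p t' = j) \<and> (\<forall>t''. t'' < t \<longrightarrow> cfn p t'' = 1/2)"
      using 2 t0 i by auto
  next
    fix q assume "\<exists>t j. q = (Some t, j) \<and> j \<in> {0,1} \<and> (\<exists>t0. t0 < t)
                   \<and> (\<forall>t'. t' \<ge> t \<longrightarrow> cfn p t' = j) \<and> (\<forall>t''. t'' < t \<longrightarrow> cfn p t'' = 1/2)"
    then obtain t j where q: "q = (Some t, j)" "j \<in> {0,1}"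
      and a: "\<forall>t'. t' \<ge> t \<longrightarrow> cfn p t' = j" and b: "\<forall>t''. t'' < t \<longrightarrow> cfn p t'' = 1/2" by blast
    have "\<not> s < t" using b[rule_format, of s] 2 i by auto
    moreover have "\<not> t < s" using a[rule_format, of t] 2 q(2) by auto
    ultimately have "s = t" by auto
    then show "q = p" using a[rule_format, of t] 2 q by auto
  qed
  then show ?thesis unfolding d_def by (subst if_not_P[OF nc])
qed

lemma neg_cfn: "cvalid p \<Longrightarrow> cvalid (negT2 p) \<and> cfn (negT2 p) = (\<lambda>t. neg3 (cfn p t))"
  by (cases p rule: cvalid.cases) (auto simp: negT2_def neg3_def fun_eq_iff)

lemma le2_cfn: "cvalid p \<Longrightarrow> cvalid q \<Longrightarrow> le2 p q \<longleftrightarrow> (\<forall>t. cfn p t \<le> cfn q t)"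
proof (cases p rule: cvalid.cases; cases q rule: cvalid.cases)
  fix c c' assume "p = (None, c)" "q = (None, c')" "cvalid p" "cvalid q"
  then show ?thesis by (auto simp: le2_def less2_def)
next
  fix c s i assume h: "p = (None, c)" "q = (Some s, i)" "cvalid p" "cvalid q"
  then obtain t0 where "t0 < s" by auto
  then show ?thesis using h
    by (auto simp: le2_def less2_def)
next
  fix c s i assume h: "q = (None, c)" "p = (Some s, i)" "cvalid p" "cvalid q"
  then obtain t0 where "t0 < s" by auto
  then show ?thesis using h
    by (auto simp: le2_def less2_def)
next
  fix s i s' j assume h: "p = (Some s, i)" "q = (Some s', j)" "cvalid p" "cvalid q"
  then show ?thesis
    by (auto simp: le2_def less2_def; metis less_irrefl linorder_neqE order_refl)
qed
lemma le2_total: "cvalid p \<Longrightarrow> cvalid q \<Longrightarrow> le2 p q \<or> le2 q p"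
  by (cases p rule: cvalid.cases; cases q rule: cvalid.cases)
     (auto simp: le2_def less2_def)

lemma max2_cfn: "cvalid p \<Longrightarrow> cvalid q \<Longrightarrow> cvalid (max2 p q) \<and> cfn (max2 p q) = (\<lambda>t. max (cfn p t) (cfn q t))"
proof -
  assume a: "cvalid p" "cvalid q"
  show ?thesis
  proof (cases "le2 p q")
    case True
    then show ?thesis using le2_cfn[OF a] a by (auto simp: max2_def fun_eq_iff max_def)
  next
    case False
    then have "le2 q p" using le2_total[OF a] by blast
    then show ?thesis using False le2_cfn[OF a(2,1)] a by (auto simp: max2_def fun_eq_iff max_def intro: antisym)
  qed
qed

lemma good_cfn: "cvalid p \<Longrightarrow> cfn p t \<in> {0,1/2,1} \<and> (cfn p t \<noteq> 1/2 \<longrightarrow> (\<forall>t'\<ge>t. cfn p t' = cfn p t))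
   \<and> (cfn p t = 1/2 \<longrightarrow> (\<forall>t'\<le>t. cfn p t' = 1/2))"
  by (cases p rule: cvalid.cases) auto

lemma key:
  fixes f g :: "'a::linorder \<Rightarrow> real"
  assumes A: "\<And>t. f t \<in> {0,1/2,1}" "\<And>t. g t \<in> {0,1/2,1}"
    and B: "\<And>t t'. f t \<noteq> 1/2 \<Longrightarrow> t \<le> t' \<Longrightarrow> f t' = f t"
           "\<And>t t'. g t \<noteq> 1/2 \<Longrightarrow> t \<le> t' \<Longrightarrow> g t' = g t"
    and C: "\<And>t t'. f t = 1/2 \<Longrightarrow> t' \<le> t \<Longrightarrow> f t' = 1/2"
           "\<And>t t'. g t = 1/2 \<Longrightarrow> t' \<le> t \<Longrightarrow> g t' = 1/2"
    and le: "\<And>t. g t \<le> f t" and ne: "f t0 \<noteq> g t0"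
  shows "(if \<forall>t'. t' \<ge> t \<longrightarrow> imp3 (f t') (g t') = imp3 (f t) (g t)
      then imp3 (f t) (g t) else 1/2) = max (1 - f t) (g t)"
proof (cases "f t = 1/2")
  case fh: True
  show ?thesis
  proof (cases "g t = 1/2")
    case True
    have "\<not> t0 \<le> t"
    proof
      assume "t0 \<le> t"
      have "f t0 = 1/2" "g t0 = 1/2" using C(1)[OF fh \<open>t0 \<le> t\<close>] C(2)[OF True \<open>t0 \<le> t\<close>] by simp_all
      then show False using ne by simp
    qed
    then have "t \<le> t0" by auto
    moreover have "imp3 (f t0) (g t0) \<noteq> 1" using le[of t0] ne by (auto simp: imp3_def)
    moreover have "imp3 (f t) (g t) = 1" using fh True by (simp add: imp3_def)
    ultimately have "\<not> (\<forall>t'. t' \<ge> t \<longrightarrow> imp3 (f t') (g t') = imp3 (f t) (g t))" by metis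
    then have "(if \<forall>t'. t' \<ge> t \<longrightarrow> imp3 (f t') (g t') = imp3 (f t) (g t)
      then imp3 (f t) (g t) else 1/2) = 1/2" by (rule if_not_P)
    moreover have "max (1 - f t) (g t) = 1/2" using fh True by simp
    ultimately show ?thesis by (simp only:)
  next
    case False
    then have "g t = 0" using A(2)[of t] le[of t] fh by auto
    then show ?thesis using fh by (simp add: imp3_def)
  qed
next
  case fn: False
  show ?thesis
  proof (cases "g t = 1/2")
    case True
    then have "f t = 1" using A(1)[of t] le[of t] fn by auto
    then show ?thesis using True by (simp add: imp3_def)
  next
    case False
    have "\<forall>t'. t' \<ge> t \<longrightarrow> imp3 (f t') (g t') = imp3 (f t) (g t)"
    proof (intro allI impI)
      fix t' assume "t \<le> t'"
      then have "f t' = f t" "g t' = g t" by (rule B(1)[OF fn], rule B(2)[OF False])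
      then show "imp3 (f t') (g t') = imp3 (f t) (g t)" by simp
    qed
    then have e: "(if \<forall>t'. t' \<ge> t \<longrightarrow> imp3 (f t') (g t') = imp3 (f t) (g t)
      then imp3 (f t) (g t) else 1/2) = imp3 (f t) (g t)" by (rule if_P)
    have "imp3 (f t) (g t) = max (1 - f t) (g t)"
      using A(1)[of t] A(2)[of t] le[of t] fn False by (auto simp: imp3_def)
    then show ?thesis using e by simp
  qed
qed

lemma main_ind:
  assumes "\<forall>x. admissible (v x)"
  shows "cvalid (sv v \<phi>) \<and> eval v \<phi> = cfn (sv v \<phi>)"
proof (induction \<phi>)
  case (Var x)
  obtain p where "cvalid p" "v x = cfn p" using adm_ex assms by blast
  then show ?case using d_cfn[OF \<open>cvalid p\<close>] by simp
next
  case Bot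
  then show ?case by (auto simp: fun_eq_iff)
next
  case (Neg \<phi>)
  then have "cvalid (sv v \<phi>)" "eval v \<phi> = cfn (sv v \<phi>)" by auto
  then show ?case using neg_cfn[of "sv v \<phi>"] by (simp add: fun_eq_iff)
next
  case (Imp \<phi> \<psi>)
  define p where "p = sv v \<phi>"
  define q where "q = sv v \<psi>"
  have vp: "cvalid p" and ep: "eval v \<phi> = cfn p" using Imp p_def by auto
  have vq: "cvalid q" and eq: "eval v \<psi> = cfn q" using Imp q_def by auto
  show ?case
  proof (cases "le2 p q")
    case True
    then have "\<forall>t. cfn p t \<le> cfn q t" using le2_cfn[OF vp vq] by blast
    then have "\<forall>t. imp3 (cfn p t) (cfn q t) = 1" by (auto simp: imp3_def)
    then show ?thesis using True p_def q_def ep eq by (auto simp: fun_eq_iff)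
  next
    case False
    then obtain t0 where t0: "\<not> cfn p t0 \<le> cfn q t0" using le2_cfn[OF vp vq] by blast
    have lq: "le2 q p" using False le2_total[OF vp vq] by blast
    then have le: "\<And>t. cfn q t \<le> cfn p t" using le2_cfn[OF vq vp] by blast
    have vn: "cvalid (negT2 p)" and en: "cfn (negT2 p) = (\<lambda>t. neg3 (cfn p t))" using neg_cfn[OF vp] by auto
    have A1: "\<And>t. cfn p t \<in> {0,1/2,1}" and A2: "\<And>t. cfn q t \<in> {0,1/2,1}"
      using good_cfn[OF vp] good_cfn[OF vq] by blast+
    have B1: "\<And>t t'. cfn p t \<noteq> 1/2 \<Longrightarrow> t \<le> t' \<Longrightarrow> cfn p t' = cfn p t"
      using good_cfn[OF vp] by blast
    have B2: "\<And>t t'. cfn q t \<noteq> 1/2 \<Longrightarrow> t \<le> t' \<Longrightarrow> cfn q t' = cfn q t"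
      using good_cfn[OF vq] by blast
    have C1: "\<And>t t'. cfn p t = 1/2 \<Longrightarrow> t' \<le> t \<Longrightarrow> cfn p t' = 1/2"
      using good_cfn[OF vp] by blast
    have C2: "\<And>t t'. cfn q t = 1/2 \<Longrightarrow> t' \<le> t \<Longrightarrow> cfn q t' = 1/2"
      using good_cfn[OF vq] by blast
    have ne: "cfn p t0 \<noteq> cfn q t0" using t0 by auto
    note K = key[where f="cfn p" and g="cfn q", OF A1 A2 B1 B2 C1 C2 le ne]
    have E: "eval v (Imp \<phi> \<psi>) = (\<lambda>t. max (1 - cfn p t) (cfn q t))"
      by (rule ext) (simp only: eval.simps ep eq, rule K)
    have M: "cfn (max2 (negT2 p) q) = (\<lambda>t. max (1 - cfn p t) (cfn q t))"
      using max2_cfn[OF vn vq] en by (simp add: neg3_def)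
    have "sv v (Imp \<phi> \<psi>) = max2 (negT2 p) q" using False p_def q_def by simp
    then show ?thesis using E M max2_cfn[OF vn vq] by simp
  qed
qed

theorem mainTheorem4:
  fixes v :: "'v \<Rightarrow> 'a::linorder \<Rightarrow> real" and \<phi> :: "'v form"
  assumes "infinite (UNIV :: 'a set)"
    and "\<forall>x. admissible (v x)"
  shows "admissible (eval v \<phi>) \<and> sv v \<phi> = d (eval v \<phi>)"
  using main_ind[OF assms(2), of \<phi>] adm_cfn d_cfn by metis

end
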